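(* There is a deterministic algorithm and a constant $C>0$ such that for all $k,n\in\mathbb{N}$ and every $a\in\mathcal{L}_n^k$, given oracle access to $f^a$, the algorithm finds a fixed point of $f^a$ using at most $C(k+n)$ queries. That is, $TARSKI(n,k)$ restricted to inputs from the family $\mathcal{F}=\{f^a: a\in\mathcal{L}_n^k\}$ has deterministic query complexity $O(k+n)$.
   Context: $\mathcal{L}_n^k=\{0,1,\ldots,n-1\}^k$ with the componentwise order. $TARSKI(n,k)$: given oracle access to an unknown monotone $f:\mathcal{L}_n^k\to\mathcal{L}_n^k$ (a query of $v$ returns $f(v)$), find $x$ with $f(x)=x$. For $a\in\mathcal{L}_n^k$, define $f^a$ coordinatewise: for $v\in\mathcal{L}_n^k$ and $i\in[k]$, $f^a_i(v)=v_i-1$ if $v_i>a_i$ and $v_j\le a_j$ for all $j<i$; $f^a_i(v)=v_i+1$ if $v_i<a_i$ and $v_j\ge a_j$ for all $j<i$; and $f^a_i(v)=v_i$ otherwise. Then $f^a(v)=(f^a_1(v),\ldots,f^a_k(v))$. *)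

theory Defs
  imports Main
begin

text \<open>Points of L_n^k are lists of naturals of length k with entries < n
  (coordinates are 0-indexed).\<close>
definition lattice :: "nat \<Rightarrow> nat \<Rightarrow> nat list set" where
  "lattice n k = {v. length v = k \<and> (\<forall>i<k. v ! i < n)}"

definition fa :: "nat list \<Rightarrow> nat list \<Rightarrow> nat list" where
  "fa a v = map (\<lambda>i.
      if a ! i < v ! i \<and> (\<forall>j<i. v ! j \<le> a ! j) then v ! i - 1
      else if v ! i < a ! i \<and> (\<forall>j<i. a ! j \<le> v ! j) then v ! i + 1
      else v ! i) [0..<length v]"

text \<open>Deterministic query algorithms as (well-founded) decision trees:
  either query a point and continue depending on the answer, or output a point.\<close>
datatype qtree = Ask "nat list" "nat list \<Rightarrow> qtree" | Output "nat list"

primrec run :: "(nat list \<Rightarrow> nat list) \<Rightarrow> qtree \<Rightarrow> nat list \<times> nat list list" where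
  "run f (Output x) = (x, [])"
| "run f (Ask v c) = (let r = run f (c (f v)) in (fst r, v # snd r))"

end

theory Submission
  imports Defs
begin

lemma fa_length[simp]: "length (fa a v) = length v"
  by (simp add: fa_def)

lemma fa_nth: "i < length v \<Longrightarrow> fa a v ! i =
  (if a ! i < v ! i \<and> (\<forall>j<i. v ! j \<le> a ! j) then v ! i - 1
   else if v ! i < a ! i \<and> (\<forall>j<i. a ! j \<le> v ! j) then v ! i + 1
   else v ! i)"
  unfolding fa_def by (simp only: nth_map length_upt nth_upt diff_zero add_0)

lemma fa_dec: "i < length v \<Longrightarrow> fa a v ! i < v ! i \<Longrightarrow> a ! i < v ! i"
  by (auto simp: fa_nth split: if_splits)

lemma fa_nodec:
  assumes "\<forall>i<length v. \<not> fa a v ! i < v ! i"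
  shows "\<forall>i<length v. v ! i \<le> a ! i"
proof (rule ccontr)
  assume "\<not> ?thesis"
  then have ex: "\<exists>i. i < length v \<and> a ! i < v ! i" by auto
  define i where "i = (LEAST i. i < length v \<and> a ! i < v ! i)"
  have i: "i < length v" "a ! i < v ! i" using LeastI_ex[OF ex] unfolding i_def by auto
  have pre: "\<forall>j<i. v ! j \<le> a ! j"
  proof (intro allI impI)
    fix j assume "j < i"
    then have "\<not> (j < length v \<and> a ! j < v ! j)" using not_less_Least i_def by blast
    then show "v ! j \<le> a ! j" using \<open>j < i\<close> i by auto
  qed
  have "fa a v ! i = v ! i - 1" using i pre by (simp add: fa_nth)
  then have "fa a v ! i < v ! i" using i by simp
  then show False using assms i by auto
qed

fun alg :: "nat \<Rightarrow> nat \<Rightarrow> nat \<Rightarrow> nat list \<Rightarrow> nat set \<Rightarrow> nat \<Rightarrow> qtree" where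
  "alg 0 n k b D t = Output []"
| "alg (Suc f) n k b D t = (let q = map (\<lambda>l. if l \<in> D then b ! l else min (t+1) (n-1)) [0..<k] in
    Ask q (\<lambda>r. if r = q then Output q
               else if (\<exists>l<k. r ! l < q ! l)
                 then alg f n k (b[(LEAST l. l<k \<and> r ! l < q ! l) := t]) (insert (LEAST l. l<k \<and> r ! l < q ! l) D) t
               else alg f n k b D (t+1)))"

definition Inv where
  "Inv a n k b D t \<longleftrightarrow> length a = k \<and> (\<forall>l<k. a ! l < n) \<and> length b = k \<and> D \<subseteq> {..<k}
     \<and> (\<forall>l\<in>D. b ! l = a ! l) \<and> (\<forall>l<k. l \<notin> D \<longrightarrow> t \<le> a ! l) \<and> t < n"

lemma alg_correct:
  "Inv a n k b D t \<Longrightarrow> (k - card D) + (n - t) \<le> f \<Longrightarrow>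
   (let r = run (fa a) (alg f n k b D t) in
      fst r \<in> lattice n k \<and> fa a (fst r) = fst r
    \<and> set (snd r) \<subseteq> lattice n k \<and> length (snd r) \<le> f)"
proof (induction f arbitrary: b D t)
  case 0
  then show ?case by (auto simp: Inv_def)
next
  case (Suc f)
  define q where "q = map (\<lambda>l. if l \<in> D then b ! l else min (t+1) (n-1)) [0..<k]"
  have inv: "length a = k" "\<forall>l<k. a ! l < n" "length b = k" "D \<subseteq> {..<k}"
     "\<forall>l\<in>D. b ! l = a ! l" "\<forall>l<k. l \<notin> D \<longrightarrow> t \<le> a ! l" "t < n"
    using Suc.prems(1) by (auto simp: Inv_def)
  have finD: "finite D" using inv(4) finite_subset by blast
  have lq: "length q = k" by (simp add: q_def)
  have qn: "\<And>l. l < k \<Longrightarrow> q ! l = (if l \<in> D then a ! l else min (t+1) (n-1))"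
    using inv(5) by (simp add: q_def)
  have qlat: "q \<in> lattice n k"
    using inv(2,7) lq by (auto simp: lattice_def qn)
  define r where "r = fa a q"
  have lr: "length r = k" using lq by (simp add: r_def)
  show ?case
  proof (cases "r = q")
    case True
    then show ?thesis using qlat by (simp add: Let_def q_def[symmetric] r_def[symmetric])
  next
    case False
    show ?thesis
    proof (cases "\<exists>l<k. r ! l < q ! l")
      case True
      define l where "l = (LEAST l. l<k \<and> r ! l < q ! l)"
      have l: "l < k" "r ! l < q ! l" using LeastI_ex[of "\<lambda>l. l<k \<and> r ! l < q ! l"] True
        unfolding l_def by auto
      have al: "a ! l < q ! l" using fa_dec[of l q a] l lq by (simp add: r_def)
      have lD: "l \<notin> D" using al qn[OF l(1)] by auto
      have alt: "a ! l = t" using al qn[OF l(1)] lD inv(6) l(1) by auto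
      have inv': "Inv a n k (b[l := t]) (insert l D) t"
        using inv l(1) alt unfolding Inv_def by (auto simp: nth_list_update)
      have cD: "card (insert l D) = Suc (card D)" using finD lD by simp
      have cDk: "card (insert l D) \<le> k"
        using card_mono[of "{..<k}" "insert l D"] inv(4) l(1) by auto
      have meas: "(k - card (insert l D)) + (n - t) \<le> f" using Suc.prems(2) cD cDk by linarith
      have IH: "let r = run (fa a) (alg f n k (b[l := t]) (insert l D) t) in
      fst r \<in> lattice n k \<and> fa a (fst r) = fst r
    \<and> set (snd r) \<subseteq> lattice n k \<and> length (snd r) \<le> f"
        using Suc.IH[OF inv' meas] .
      show ?thesis using IH qlat False True
        by (simp add: Let_def q_def[symmetric] r_def[symmetric] l_def[symmetric])
    next
      case nodec: False
      have le: "\<forall>i<k. q ! i \<le> a ! i"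
        using fa_nodec[of q a] nodec lq by (auto simp: r_def)
      have tn: "t + 1 < n"
      proof (rule ccontr)
        assume "\<not> t + 1 < n"
        then have "\<forall>i<k. q ! i = a ! i"
        proof (intro allI impI)
          fix i assume i: "i < k"
          show "q ! i = a ! i"
          proof (cases "i \<in> D")
            case True then show ?thesis using qn[OF i] by simp
          next
            case False
            then have "t \<le> a ! i" "a ! i < n" using inv(2,6) i by auto
            then show ?thesis using qn[OF i] False \<open>\<not> t + 1 < n\<close> by auto
          qed
        qed
        then have "q = a" using lq inv(1) by (simp add: nth_equalityI)
        then have "r = q" unfolding r_def using inv(1) by (simp add: fa_def) (metis map_nth)
        then show False using False by simp
      qed
      have inv': "Inv a n k b D (t+1)"
        using inv le qn tn unfolding Inv_def by force
      have meas: "(k - card D) + (n - (t+1)) \<le> f" using Suc.prems(2) tn by linarith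
      have IH: "let r = run (fa a) (alg f n k b D (t+1)) in
      fst r \<in> lattice n k \<and> fa a (fst r) = fst r
    \<and> set (snd r) \<subseteq> lattice n k \<and> length (snd r) \<le> f"
        using Suc.IH[OF inv' meas] .
      have run_eq: "run (fa a) (alg (Suc f) n k b D t) = (let r' = run (fa a) (alg f n k b D (t+1)) in (fst r', q # snd r'))"
        using False nodec by (simp add: Let_def q_def[symmetric] r_def[symmetric] del: alg.simps(2)) (auto simp add: q_def[symmetric] r_def[symmetric] Let_def)
      show ?thesis using IH qlat unfolding run_eq by (simp add: Let_def)
    qed
  qed
qed

theorem proposition10:
  shows "\<exists>(C::nat) > 0. \<exists>A :: nat \<Rightarrow> nat \<Rightarrow> qtree.
           \<forall>n k a. a \<in> lattice n k \<longrightarrow>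
             (let r = run (fa a) (A n k) in
                fst r \<in> lattice n k \<and> fa a (fst r) = fst r
              \<and> set (snd r) \<subseteq> lattice n k
              \<and> length (snd r) \<le> C * (k + n))"
proof (intro exI conjI allI impI)
  show "(1::nat) > 0" by simp
  fix n k a
  assume a: "a \<in> lattice n k"
  show "let r = run (fa a) ((\<lambda>n k. if k = 0 then Output [] else alg (k + n) n k (replicate k 0) {} 0) n k) in
                fst r \<in> lattice n k \<and> fa a (fst r) = fst r
              \<and> set (snd r) \<subseteq> lattice n k
              \<and> length (snd r) \<le> 1 * (k + n)"
  proof (cases "k = 0")
    case True
    then show ?thesis by (simp add: lattice_def fa_def)
  next
    case False
    then have "n > 0" using a by (auto simp: lattice_def)
    then have "Inv a n k (replicate k 0) {} 0" using a by (auto simp: Inv_def lattice_def)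
    from alg_correct[OF this, of "k + n"] False show ?thesis by simp
  qed
qed

end
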